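(* Let $\mathrm{NT}=\{(x_1,x_2,x_3)\in\mathbb{R}^3: 2^kx_1+2\cdot 3^kx_2+5^kx_3\ge 0 \text{ for all integers } k\ge 0\}$ with topological boundary $\partial\mathrm{NT}$. Then for every integer $n\ge 0$, the point $\left(\frac{1}{2^n},-\frac{1}{3^n},\frac{1}{5^n}\right)$ lies in $\partial\mathrm{NT}$.
   Context: $\mathrm{NT}$ is the non-termination set of the loop "while $(x_1+2x_2+x_3\ge 0)$ $\{(x_1,x_2,x_3):=(2x_1,3x_2,5x_3)\}$". *)

theory Defs
  imports "HOL-Analysis.Analysis"
begin

text \<open>Non-termination set of the loop
  while (x1 + 2 x2 + x3 \<ge> 0) do (x1,x2,x3) := (2 x1, 3 x2, 5 x3),
  as a subset of R^3 = real \<times> real \<times> real (product topology = Euclidean).\<close>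
definition NT :: "(real \<times> real \<times> real) set" where
  "NT = {(x1, x2, x3). \<forall>k::nat. 2^k * x1 + 2 * 3^k * x2 + 5^k * x3 \<ge> 0}"

end

theory Submission
  imports Defs
begin

lemma amgm_gen:
  fixes a b c :: real
  assumes "0 \<le> a" "0 \<le> b" "0 \<le> c" "c * c \<le> a * b"
  shows "2 * c \<le> a + b"
proof -
  have e: "(a + b) * (a + b) - 4 * (a * b) = (a - b) * (a - b)" by (simp add: algebra_simps)
  have "0 \<le> (a - b) * (a - b)" by simp
  hence "4 * (a * b) \<le> (a + b) * (a + b)" using e by linarith
  hence "(2 * c) * (2 * c) \<le> (a + b) * (a + b)" using assms(4) by linarith
  hence "(2 * c)^2 \<le> (a + b)^2" by (simp only: power2_eq_square)
  moreover have "0 \<le> a + b" using assms by linarith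
  ultimately show ?thesis by (rule power2_le_imp_le)
qed

lemma amgm: "(2::real) * 3^m \<le> 5^m + 2^m"
proof (rule amgm_gen)
  have p3: "(3::real)^m * 3^m = 9^m" by (simp add: power_mult_distrib[symmetric])
  have p10: "(5::real)^m * 2^m = 10^m" by (simp add: power_mult_distrib[symmetric])
  have m: "(9::real)^m \<le> 10^m" by (rule power_mono) auto
  show "(3::real)^m * 3^m \<le> 5^m * 2^m" unfolding p3 p10 by (rule m)
qed simp_all

lemma n2: "(10::real)^j \<le> 15^j \<Longrightarrow> (2::real) * 10^(j+2) \<le> 15^(j+2)"
proof -
  assume h: "(10::real)^j \<le> 15^j"
  have a: "(10::real)^(j+2) = 100 * 10^j" by (simp add: power_add)
  have b: "(15::real)^(j+2) = 225 * 15^j" by (simp add: power_add)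
  have z: "(0::real) \<le> 15^j" by simp
  show ?thesis unfolding a b using h z by linarith
qed

lemma fr: "(2::real) * 10^m \<le> 15^m + 6^m \<Longrightarrow> (0::real) \<le> 1/2^m - 2/3^m + 1/5^m"
proof -
  assume h: "(2::real) * 10^m \<le> 15^m + 6^m"
  have q1: "(30::real)^m = 2^m * 15^m" by (simp add: power_mult_distrib[symmetric])
  have q2: "(30::real)^m = 3^m * 10^m" by (simp add: power_mult_distrib[symmetric])
  have q3: "(30::real)^m = 5^m * 6^m" by (simp add: power_mult_distrib[symmetric])
  have a1: "15^m/30^m = 1/(2::real)^m" unfolding q1 by simp
  have a2: "2*10^m/30^m = 2/(3::real)^m" unfolding q2 by simp
  have a3: "6^m/30^m = 1/(5::real)^m" unfolding q3 by simp
  have "0 \<le> (15^m + 6^m - 2 * 10^m) / (30::real)^m" using h by simp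
  also have "(15^m + 6^m - 2 * 10^m) / (30::real)^m = 15^m/30^m + 6^m/30^m - 2*10^m/30^m"
    by (simp add: diff_divide_distrib add_divide_distrib)
  finally show ?thesis using a1 a2 a3 by simp
qed

lemma neg_case:
  assumes "m \<ge> 1" shows "(0::real) \<le> 1/2^m - 2/3^m + 1/5^m"
proof (cases "m = 1")
  case True thus ?thesis by simp
next
  case False
  define j where "j = m - 2"
  have m: "m = j + 2" using False assms unfolding j_def by arith
  have "(10::real)^j \<le> 15^j" by (rule power_mono) auto
  hence "(2::real) * 10^(j+2) \<le> 15^(j+2)" by (rule n2)
  hence "(2::real) * 10^m \<le> 15^m" unfolding m .
  moreover have "(0::real) \<le> 6^m" by simp
  ultimately have "(2::real) * 10^m \<le> 15^m + 6^m" by linarith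
  thus ?thesis by (rule fr)
qed

lemma inNT: "(1 / 2^n, - (1 / 3^n), 1 / 5^n) \<in> NT"
  unfolding NT_def
proof (clarsimp)
  fix k :: nat
  show "0 \<le> 2 ^ k / 2 ^ n - 2 * 3 ^ k / 3 ^ n + 5 ^ k / (5 ^ n::real)"
  proof (cases "n \<le> k")
    case True
    then obtain m where k: "k = n + m" using le_Suc_ex by blast
    have "(2::real) ^ k / 2 ^ n = 2^m" "(2::real) * 3 ^ k / 3 ^ n = 2*3^m" "(5::real) ^ k / 5 ^ n = 5^m"
      by (simp_all add: k power_add)
    note e = this
    show ?thesis unfolding e using amgm[of m] by linarith
  next
    case False
    define m where "m = n - k"
    have n: "n = k + m" "m \<ge> 1" using False unfolding m_def by arith+
    have "(2::real) ^ k / 2 ^ n = 1/2^m" "(2::real) * 3 ^ k / 3 ^ n = 2/3^m" "(5::real) ^ k / 5 ^ n = 1/5^m"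
      by (simp_all add: n(1) power_add)
    note e = this
    show ?thesis unfolding e using neg_case[OF n(2)] by linarith
  qed
qed

theorem lemma14:
  fixes n :: nat
  shows "(1 / 2^n, - (1 / 3^n), 1 / 5^n) \<in> frontier NT"
proof -
  let ?p = "(1 / 2^n, - (1 / 3^n), 1 / 5^n) :: real \<times> real \<times> real"
  have "?p \<notin> interior NT"
  proof
    assume "?p \<in> interior NT"
    then obtain e where e: "e > 0" "ball ?p e \<subseteq> NT" using mem_interior by blast
    let ?q = "(1 / 2^n, - (1 / 3^n), 1 / 5^n - e/2) :: real \<times> real \<times> real"
    have "dist ?p ?q = e/2" using e by (simp add: dist_Pair_Pair dist_real_def)
    hence "?q \<in> NT" using e by auto
    hence "0 \<le> 2^n * (1/2^n) + 2 * 3^n * (- (1/3^n)) + 5^n * (1/5^n - e/2::real)"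
      unfolding NT_def by blast
    hence "0 \<le> - (5^n * e/2::real)" by (simp add: algebra_simps)
    moreover have "(5::real)^n * e / 2 > 0" using e by simp
    ultimately show False by linarith
  qed
  moreover have "?p \<in> closure NT" using inNT closure_subset by blast
  ultimately show ?thesis unfolding frontier_def by blast
qed

end
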